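(* Let $0<\gamma<2$, $\gamma\ne 4/3$, let $\chi\in C^3(\mathbb{R})$ with $\chi>0$, and let $\phi_1$ satisfy $\chi'(\phi_1)=0$. Set $\Delta_1=(\gamma-2)/4$ and $\Delta_2=(4-3\gamma)/6$. Then: (a) $(x,y,z,\phi)=(0,0,1,\phi_1)$ is an equilibrium of system $(\ast)$, and the linearization of $(\ast)$ there has eigenvalues $\gamma/2,\ \gamma,\ \Delta_1\pm\sqrt{\Delta_1^2+\Delta_2\,\chi''(\phi_1)/\chi(\phi_1)}$. (b) For the planar system $y'=\tfrac12(1-y^2)\Big(y(\gamma-2)+\frac{4-3\gamma}{\sqrt6}\frac{\chi'(\phi)}{\chi(\phi)}\Big)$, $\phi'=\sqrt{2/3}\,y$ (the restriction of $(\ast)$ to $x=0$, $y^2+z^2=1$), the equilibrium $(y,\phi)=(0,\phi_1)$ has linearization eigenvalues $\Delta_1\pm\sqrt{\Delta_1^2+\Delta_2\chi''(\phi_1)/\chi(\phi_1)}$, and it is: a stable focus if either $0<\gamma<4/3$ and $\chi''(\phi_1)<-\Delta_1^2\chi(\phi_1)/\Delta_2$, or $4/3<\gamma<2$ and $\chi''(\phi_1)>-\Delta_1^2\chi(\phi_1)/\Delta_2$; a stable node if either $0<\gamma<4/3$ and $-\Delta_1^2\chi(\phi_1)/\Delta_2\le\chi''(\phi_1)<0$, or $4/3<\gamma<2$ and $0<\chi''(\phi_1)\le-\Delta_1^2\chi(\phi_1)/\Delta_2$; a saddle if either $0<\gamma<4/3$ and $\chi''(\phi_1)>0$, or $4/3<\gamma<2$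 and $\chi''(\phi_1)<0$; and non-hyperbolic if $\chi''(\phi_1)=0$.
   Context: System $(\ast)$ (prime $=d/d\tau$): $x'=\tfrac12 x(2y^2+\gamma z^2)$; $y'=y^3+\tfrac12(\gamma z^2-2)y-\frac{x^2V'(\phi)}{3\sqrt6}+\frac{(4-3\gamma)z^2}{2\sqrt6}\frac{\chi'(\phi)}{\chi(\phi)}$; $z'=\tfrac12 z(2y^2+(z^2-1)\gamma)-\frac{(4-3\gamma)yz}{2\sqrt6}\frac{\chi'(\phi)}{\chi(\phi)}$; $\phi'=\sqrt{2/3}\,y$, where $V\in C^3$, $V\ge0$. Eigenvalues in (a) refer to the Jacobian of the vector field at the point (with the $z$-direction understood as the direction normal to the circle $y^2+z^2=1$ within the constraint surface). *)

theory Defs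
  imports "HOL-Analysis.Analysis" "HOL-Computational_Algebra.Polynomial"
begin

text \<open>The vector field of system (*), on the state space real^4 with coordinates
  u$1 = x, u$2 = y, u$3 = z, u$4 = phi.  V1 is V', chi1 is chi'.\<close>
definition sysF :: "real \<Rightarrow> (real \<Rightarrow> real) \<Rightarrow> (real \<Rightarrow> real) \<Rightarrow> (real \<Rightarrow> real)
                     \<Rightarrow> real^4 \<Rightarrow> real^4" where
  "sysF \<gamma> V1 chi chi1 u =
     (let x = u$1; y = u$2; z = u$3; \<phi> = u$4 in
      vector [ 1/2 * x * (2 * y^2 + \<gamma> * z^2),
               y^3 + 1/2 * (\<gamma> * z^2 - 2) * y - x^2 * V1 \<phi> / (3 * sqrt 6)
                 + (4 - 3*\<gamma>) * z^2 / (2 * sqrt 6) * (chi1 \<phi> / chi \<phi>),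
               1/2 * z * (2 * y^2 + (z^2 - 1) * \<gamma>)
                 - (4 - 3*\<gamma>) * y * z / (2 * sqrt 6) * (chi1 \<phi> / chi \<phi>),
               sqrt (2/3) * y ])"

definition planarF :: "real \<Rightarrow> (real \<Rightarrow> real) \<Rightarrow> (real \<Rightarrow> real) \<Rightarrow> real^2 \<Rightarrow> real^2" where
  "planarF \<gamma> chi chi1 w =
     (let y = w$1; \<phi> = w$2 in
      vector [ 1/2 * (1 - y^2) * (y * (\<gamma> - 2) + (4 - 3*\<gamma>) / sqrt 6 * (chi1 \<phi> / chi \<phi>)),
               sqrt (2/3) * y ])"

definition charpoly :: "real^'n^'n \<Rightarrow> complex poly" where
  "charpoly A = det (\<chi> i j. (if i = j then [:0, 1:] else 0) - [:complex_of_real (A$i$j):])"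

definition eigenvalues :: "real^'n^'n \<Rightarrow> complex set" where
  "eigenvalues A = {l. \<exists>v :: complex^'n. v \<noteq> 0 \<and>
        (\<chi> i j. complex_of_real (A$i$j)) *v v = l *s v}"

definition stable_focus :: "(real^'n \<Rightarrow> real^'n) \<Rightarrow> real^'n \<Rightarrow> bool" where
  "stable_focus f p \<longleftrightarrow> f p = 0 \<and>
     (\<forall>l\<in>eigenvalues (jacobian f (at p)). Im l \<noteq> 0 \<and> Re l < 0)"

definition stable_node :: "(real^'n \<Rightarrow> real^'n) \<Rightarrow> real^'n \<Rightarrow> bool" where
  "stable_node f p \<longleftrightarrow> f p = 0 \<and>
     (\<forall>l\<in>eigenvalues (jacobian f (at p)). Im l = 0 \<and> Re l < 0)"

definition saddle :: "(real^'n \<Rightarrow> real^'n) \<Rightarrow> real^'n \<Rightarrow> bool" where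
  "saddle f p \<longleftrightarrow> f p = 0 \<and>
     (\<exists>l\<in>eigenvalues (jacobian f (at p)). Im l = 0 \<and> Re l > 0) \<and>
     (\<exists>l\<in>eigenvalues (jacobian f (at p)). Im l = 0 \<and> Re l < 0)"

definition non_hyperbolic :: "(real^'n \<Rightarrow> real^'n) \<Rightarrow> real^'n \<Rightarrow> bool" where
  "non_hyperbolic f p \<longleftrightarrow> f p = 0 \<and>
     (\<exists>l\<in>eigenvalues (jacobian f (at p)). Re l = 0)"

end

theory Submission
  imports Defs
begin


lemma has_derivative_vec_cw:
  fixes f :: "'a::real_normed_vector \<Rightarrow> real^'n"
  assumes "\<And>i. ((\<lambda>x. f x $ i) has_derivative (\<lambda>h. f' h $ i)) (at a within S)"
  shows "(f has_derivative f') (at a within S)"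
  using assms by (subst has_derivative_componentwise_within) (auto simp: Basis_vec_def inner_axis)

lemma vector_4 [simp]:
 "(vector [x,y,z,w] ::('a::zero)^4)$1 = x"
 "(vector [x,y,z,w] ::('a::zero)^4)$2 = y"
 "(vector [x,y,z,w] ::('a::zero)^4)$3 = z"
 "(vector [x,y,z,w] ::('a::zero)^4)$4 = w"
  unfolding vector_def by simp_all

lemma comp_nth:
  assumes "(g has_real_derivative d) (at (x$i))"
  shows "((\<lambda>u::real^'n. g (u$i)) has_derivative (\<lambda>h. d * h$i)) (at x)"
  using has_derivative_compose[OF bounded_linear_imp_has_derivative[OF bounded_linear_vec_nth[of i]], 
      of g "(*) d" x UNIV] assms
  by (simp add: has_field_derivative_def)

lemma nth_deriv: "((\<lambda>u::real^'n. u$i) has_derivative (\<lambda>h. h$i)) F"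
  by (rule bounded_linear_imp_has_derivative) (rule bounded_linear_vec_nth)

definition A4 :: "real \<Rightarrow> real \<Rightarrow> real^4^4" where
  "A4 \<gamma> a = vector [vector [\<gamma>/2,0,0,0], vector [0,(\<gamma>-2)/2,0,a], vector [0,0,\<gamma>,0],
                    vector [0, sqrt(2/3),0,0]]"

lemma F_deriv:
  fixes \<gamma> \<phi>1 :: real and V1 V2 chi chi1 chi2 :: "real \<Rightarrow> real"
  assumes V: "\<And>t. (V1 has_real_derivative V2 t) (at t)"
    and chi: "\<And>t. (chi has_real_derivative chi1 t) (at t)"
                "\<And>t. (chi1 has_real_derivative chi2 t) (at t)"
    and chi_pos: "\<And>t. chi t > 0"
    and crit: "chi1 \<phi>1 = 0"
  shows "(sysF \<gamma> V1 chi chi1 has_derivative (\<lambda>h. A4 \<gamma> ((4-3*\<gamma>)/(2* sqrt 6) * (chi2 \<phi>1 / chi \<phi>1)) *v h))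
           (at (vector [0,0,1,\<phi>1]))"
proof -
  define G where "G t = chi1 t / chi t" for t
  define Gd where "Gd t = (chi2 t * chi t - chi1 t * chi1 t) / (chi t * chi t)" for t
  have G: "(G has_real_derivative Gd t) (at t)" for t
    unfolding G_def Gd_def using chi_pos[of t]
    by (intro DERIV_divide chi) auto
  have Gd1: "Gd \<phi>1 = chi2 \<phi>1 / chi \<phi>1" using chi_pos[of \<phi>1] crit by (simp add: Gd_def)
  have G1: "G \<phi>1 = 0" using crit by (simp add: G_def)
  let ?p = "vector [0,0,1,\<phi>1] :: real^4"
  let ?k = "(4-3*\<gamma>)/(2* sqrt 6)"
  have e: "sysF \<gamma> V1 chi chi1 = (\<lambda>u. vector [ 1/2 * u$1 * (2 * u$2^2 + \<gamma> * u$3^2),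
               u$2^3 + 1/2 * (\<gamma> * u$3^2 - 2) * u$2 - u$1^2 * V1 (u$4) / (3 * sqrt 6)
                 + (4 - 3*\<gamma>) * u$3^2 / (2 * sqrt 6) * G (u$4),
               1/2 * u$3 * (2 * u$2^2 + (u$3^2 - 1) * \<gamma>)
                 - (4 - 3*\<gamma>) * u$2 * u$3 / (2 * sqrt 6) * G (u$4),
               sqrt (2/3) * u$2 ])"
    by (auto simp: sysF_def G_def Let_def fun_eq_iff)
  show ?thesis
    unfolding e
  proof (rule has_derivative_vec_cw)
    fix i :: 4
    have V': "((\<lambda>u::real^4. V1 (u$4)) has_derivative (\<lambda>h. V2 (?p$4) * h$4)) (at ?p)"
      by (rule comp_nth[OF V])
    have G': "((\<lambda>u::real^4. G (u$4)) has_derivative (\<lambda>h. Gd (?p$4) * h$4)) (at ?p)"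
      by (rule comp_nth[OF G])
    consider "i = 1" | "i = 2" | "i = 3" | "i = 4" using exhaust_4 by blast
    then show "((\<lambda>x. vector [ 1/2 * x$1 * (2 * x$2^2 + \<gamma> * x$3^2),
               x$2^3 + 1/2 * (\<gamma> * x$3^2 - 2) * x$2 - x$1^2 * V1 (x$4) / (3 * sqrt 6)
                 + (4 - 3*\<gamma>) * x$3^2 / (2 * sqrt 6) * G (x$4),
               1/2 * x$3 * (2 * x$2^2 + (x$3^2 - 1) * \<gamma>)
                 - (4 - 3*\<gamma>) * x$2 * x$3 / (2 * sqrt 6) * G (x$4),
               sqrt (2/3) * x$2 ] $ i) has_derivative
          (\<lambda>h. (A4 \<gamma> (?k * (chi2 \<phi>1 / chi \<phi>1)) *v h) $ i)) (at ?p)"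
    proof cases
      case 1 then show ?thesis
        apply simp
        apply (rule derivative_eq_intros nth_deriv | simp)+
        apply (simp add: A4_def matrix_vector_mult_def sum_4 fun_eq_iff)
        done
    next
      case 2 then show ?thesis
        apply simp
        apply (rule derivative_eq_intros nth_deriv V' G' | simp)+
        apply (simp add: A4_def matrix_vector_mult_def sum_4 fun_eq_iff G1 Gd1 ac_simps)
        done
    next
      case 3 then show ?thesis
        apply simp
        apply (rule derivative_eq_intros nth_deriv V' G' | simp)+
        apply (simp add: A4_def matrix_vector_mult_def sum_4 fun_eq_iff G1 Gd1 ac_simps)
        done
    next
      case 4 then show ?thesis
        apply simp
        apply (rule derivative_eq_intros nth_deriv V' G' | simp)+
        apply (simp add: A4_def matrix_vector_mult_def sum_4 fun_eq_iff G1 Gd1 ac_simps)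
        done
    qed
  qed
qed


lemma  det_4:
  "det (A::'a::comm_ring_1^4^4) = A $ 1 $ 1 * (A $ 2 $ 2 * (A $ 3 $ 3 * A $ 4 $ 4)) -
     A $ 1 $ 1 * (A $ 2 $ 2 * (A $ 3 $ 4 * A $ 4 $ 3)) +
     (A $ 1 $ 1 * (A $ 2 $ 3 * (A $ 3 $ 4 * A $ 4 $ 2)) -
      A $ 1 $ 1 * (A $ 2 $ 3 * (A $ 3 $ 2 * A $ 4 $ 4)) +
      (A $ 1 $ 1 * (A $ 2 $ 4 * (A $ 3 $ 2 * A $ 4 $ 3)) -
       A $ 1 $ 1 * (A $ 2 $ 4 * (A $ 3 $ 3 * A $ 4 $ 2)))) +
     (A $ 1 $ 2 * (A $ 2 $ 1 * (A $ 3 $ 4 * A $ 4 $ 3)) -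
      A $ 1 $ 2 * (A $ 2 $ 1 * (A $ 3 $ 3 * A $ 4 $ 4)) +
      (A $ 1 $ 2 * (A $ 2 $ 3 * (A $ 3 $ 1 * A $ 4 $ 4)) -
       A $ 1 $ 2 * (A $ 2 $ 3 * (A $ 3 $ 4 * A $ 4 $ 1)) +
       (A $ 1 $ 2 * (A $ 2 $ 4 * (A $ 3 $ 3 * A $ 4 $ 1)) -
        A $ 1 $ 2 * (A $ 2 $ 4 * (A $ 3 $ 1 * A $ 4 $ 3)))) +
      (A $ 1 $ 3 * (A $ 2 $ 2 * (A $ 3 $ 4 * A $ 4 $ 1)) -
       A $ 1 $ 3 * (A $ 2 $ 2 * (A $ 3 $ 1 * A $ 4 $ 4)) +
       (A $ 1 $ 3 * (A $ 2 $ 1 * (A $ 3 $ 2 * A $ 4 $ 4)) -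
        A $ 1 $ 3 * (A $ 2 $ 1 * (A $ 3 $ 4 * A $ 4 $ 2)) +
        (A $ 1 $ 3 * (A $ 2 $ 4 * (A $ 3 $ 1 * A $ 4 $ 2)) -
         A $ 1 $ 3 * (A $ 2 $ 4 * (A $ 3 $ 2 * A $ 4 $ 1)))) +
       (A $ 1 $ 4 * (A $ 2 $ 2 * (A $ 3 $ 1 * A $ 4 $ 3)) -
        A $ 1 $ 4 * (A $ 2 $ 2 * (A $ 3 $ 3 * A $ 4 $ 1)) +
        (A $ 1 $ 4 * (A $ 2 $ 3 * (A $ 3 $ 2 * A $ 4 $ 1)) -
         A $ 1 $ 4 * (A $ 2 $ 3 * (A $ 3 $ 1 * A $ 4 $ 2)) +
         (A $ 1 $ 4 * (A $ 2 $ 1 * (A $ 3 $ 3 * A $ 4 $ 2)) -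
          A $ 1 $ 4 * (A $ 2 $ 1 * (A $ 3 $ 2 * A $ 4 $ 3)))))))"
proof -
  have f1: "finite {2::4, 3, 4}" "1 \<notin> {2::4, 3, 4}"
    by auto
  have f2: "finite {3::4, 4}" "2 \<notin> {3::4, 4}"
    by auto
  have f3: "finite {4::4}" "3 \<notin> {4::4}"
    by auto
  show ?thesis
    unfolding det_def UNIV_4
    unfolding sum_over_permutations_insert[OF f1]
    unfolding sum_over_permutations_insert[OF f2]
    unfolding sum_over_permutations_insert[OF f3]
    unfolding permutes_sing
    by (simp add: sign_swap_id permutation_swap_id sign_compose sign_id swap_id_eq permutation_compose)
qed

lemma charpoly_A4: "charpoly (A4 g a) = [:-complex_of_real (g/2), 1:] * [:-complex_of_real g, 1:] *
   [:- complex_of_real (sqrt(2/3)*a), - complex_of_real ((g-2)/2), 1:]"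
  apply (simp add: charpoly_def det_4 A4_def)
  apply (simp add: field_simps)
  done


lemma focus_roots:
  fixes l :: complex and d e :: real
  assumes eq: "l^2 - 2 * of_real d * l - of_real e = 0" and "d < 0" "d^2 + e < 0"
  shows "Im l \<noteq> 0 \<and> Re l < 0"
proof -
  obtain x y where l: "l = Complex x y" by (cases l)
  from eq have r: "x^2 - y^2 - 2*d*x - e = 0" and i: "2*x*y - 2*d*y = 0"
    by (simp_all add: l complex_eq_iff power2_eq_square)
  have "y \<noteq> 0"
  proof
    assume "y = 0"
    with r have "(x-d)^2 = d^2 + e" by (simp add: power2_eq_square algebra_simps)
    with assms(3) show False by (metis power2_less_0)
  qed
  with i have "x = d" by simp
  with \<open>y \<noteq> 0\<close> assms(2) show ?thesis by (simp add: l)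
qed

lemma node_roots:
  fixes l :: complex and d e :: real
  assumes eq: "l^2 - 2 * of_real d * l - of_real e = 0" and "d < 0" "e < 0" "d^2 + e \<ge> 0"
  shows "Im l = 0 \<and> Re l < 0"
proof -
  obtain x y where l: "l = Complex x y" by (cases l)
  from eq have r: "x^2 - y^2 - 2*d*x - e = 0" and i: "2*x*y - 2*d*y = 0"
    by (simp_all add: l complex_eq_iff power2_eq_square)
  have "y = 0"
  proof (rule ccontr)
    assume "y \<noteq> 0"
    with i have "x = d" by simp
    with r have "y^2 = - (d^2 + e)" by (simp add: power2_eq_square algebra_simps)
    moreover have "y^2 > 0" using \<open>y \<noteq> 0\<close> by simp
    ultimately show False using assms(4) by linarith
  qed
  moreover have "x < 0"
  proof (rule ccontr)
    assume "\<not> x < 0"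
    then have "d*x \<le> 0" using assms(2) mult_nonpos_nonneg[of d x] by simp
    moreover have "x^2 \<ge> 0" by simp
    ultimately have "x^2 - 2*d*x \<ge> 0" by linarith
    with r \<open>y = 0\<close> assms(3) show False by simp
  qed
  ultimately show ?thesis by (simp add: l)
qed

lemma saddle_roots:
  fixes d e :: real
  assumes "e > 0"
  shows "\<exists>r. r > 0 \<and> (complex_of_real r)^2 - 2 * of_real d * of_real r - of_real e = 0"
        "\<exists>r. r < 0 \<and> (complex_of_real r)^2 - 2 * of_real d * of_real r - of_real e = 0"
proof -
  define s where "s = sqrt (d^2 + e)"
  have s2: "s^2 = d^2 + e" using assms by (simp add: s_def add_pos_nonneg)
  have sp: "s > \<bar>d\<bar>" unfolding s_def using assms
    using real_sqrt_less_mono[of "d^2" "d^2+e"] by (simp add: real_sqrt_abs)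
  have q: "r^2 - 2*d*r - e = 0" if "r = d + s \<or> r = d - s" for r
    using that s2 by (auto simp: power2_eq_square algebra_simps)
  have c: "(complex_of_real r)^2 - 2 * of_real d * of_real r - of_real e = of_real (r^2 - 2*d*r - e)" for r
    by simp
  show "\<exists>r. r > 0 \<and> (complex_of_real r)^2 - 2 * of_real d * of_real r - of_real e = 0"
    by (rule exI[of _ "d+s"], subst c, subst q) (use sp in auto)
  show "\<exists>r. r < 0 \<and> (complex_of_real r)^2 - 2 * of_real d * of_real r - of_real e = 0"
    by (rule exI[of _ "d-s"], subst c, subst q) (use sp in auto)
qed


definition B2 :: "real \<Rightarrow> real \<Rightarrow> real \<Rightarrow> real^2^2" where
  "B2 u b s = vector [vector [u, b], vector [s, 0]]"

lemma eig_B2: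
  assumes "s \<noteq> 0"
  shows "l \<in> eigenvalues (B2 u b s) \<longleftrightarrow> l^2 - of_real u * l - of_real (s*b) = 0"
proof
  assume "l \<in> eigenvalues (B2 u b s)"
  then obtain v :: "complex^2" where v: "v \<noteq> 0" "(\<chi> i j. complex_of_real (B2 u b s$i$j)) *v v = l *s v"
    by (auto simp: eigenvalues_def)
  from v(2) have e1: "of_real u * v$1 + of_real b * v$2 = l * v$1" and e2: "of_real s * v$1 = l * v$2"
    by (auto simp: vec_eq_iff forall_2 B2_def matrix_vector_mult_def sum_2)
  have "v$2 \<noteq> 0"
  proof
    assume "v$2 = 0"
    with e2 assms have "v$1 = 0" by simp
    with \<open>v$2 = 0\<close> v(1) show False by (auto simp: vec_eq_iff forall_2)
  qed
  have "(l^2 - of_real u * l - of_real (s*b)) * v$2 = 0"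
  proof -
    have "(l^2 - of_real u * l - of_real (s*b)) * v$2 = l * (l * v$2) - of_real u * (l * v$2) - of_real s * (of_real b * v$2)"
      by (simp add: power2_eq_square algebra_simps)
    also have "\<dots> = of_real s * (l * v$1 - of_real u * v$1 - of_real b * v$2)"
      unfolding e2[symmetric] by (simp add: algebra_simps)
    also have "\<dots> = 0" using e1 by (simp add: algebra_simps)
    finally show ?thesis .
  qed
  with \<open>v$2 \<noteq> 0\<close> show "l^2 - of_real u * l - of_real (s*b) = 0" by simp
next
  assume h: "l^2 - of_real u * l - of_real (s*b) = 0"
  define v :: "complex^2" where "v = vector [l, of_real s]"
  have "v \<noteq> 0" using assms by (auto simp: v_def vec_eq_iff forall_2)
  moreover have "(\<chi> i j. complex_of_real (B2 u b s$i$j)) *v v = l *s v"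
  proof -
    have "of_real u * l + of_real b * of_real s = l * l"
      using h by (simp add: power2_eq_square algebra_simps)
    then show ?thesis
      by (auto simp: vec_eq_iff forall_2 B2_def matrix_vector_mult_def sum_2 v_def mult.commute)
  qed
  ultimately show "l \<in> eigenvalues (B2 u b s)" by (auto simp: eigenvalues_def)
qed

lemma charpoly_B2: "charpoly (B2 u b s) = [:- complex_of_real (s*b), - complex_of_real u, 1:]"
  by (simp add: charpoly_def det_2 B2_def field_simps)


lemma P_deriv:
  fixes \<gamma> \<phi>1 :: real and chi chi1 chi2 :: "real \<Rightarrow> real"
  assumes chi: "\<And>t. (chi has_real_derivative chi1 t) (at t)"
                "\<And>t. (chi1 has_real_derivative chi2 t) (at t)"
    and chi_pos: "\<And>t. chi t > 0"
    and crit: "chi1 \<phi>1 = 0"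
  shows "(planarF \<gamma> chi chi1 has_derivative
           (\<lambda>h. B2 ((\<gamma>-2)/2) ((4-3*\<gamma>)/(2 * sqrt 6) * (chi2 \<phi>1 / chi \<phi>1)) (sqrt (2/3)) *v h))
           (at (vector [0,\<phi>1]))"
proof -
  define G where "G t = chi1 t / chi t" for t
  define Gd where "Gd t = (chi2 t * chi t - chi1 t * chi1 t) / (chi t * chi t)" for t
  have G: "(G has_real_derivative Gd t) (at t)" for t
    unfolding G_def Gd_def using chi_pos[of t]
    by (intro DERIV_divide chi) auto
  have Gd1: "Gd \<phi>1 = chi2 \<phi>1 / chi \<phi>1" using chi_pos[of \<phi>1] crit by (simp add: Gd_def)
  have G1: "G \<phi>1 = 0" using crit by (simp add: G_def)
  let ?p = "vector [0,\<phi>1] :: real^2"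
  have e: "planarF \<gamma> chi chi1 = (\<lambda>w. vector [ 1/2 * (1 - w$1^2) * (w$1 * (\<gamma> - 2) + (4 - 3*\<gamma>) / sqrt 6 * G (w$2)),
               sqrt (2/3) * w$1 ])"
    by (auto simp: planarF_def G_def Let_def fun_eq_iff)
  show ?thesis
    unfolding e
  proof (rule has_derivative_vec_cw)
    fix i :: 2
    have G': "((\<lambda>u::real^2. G (u$2)) has_derivative (\<lambda>h. Gd (?p$2) * h$2)) (at ?p)"
      by (rule comp_nth[OF G])
    consider "i = 1" | "i = 2" using exhaust_2 by blast
    then show "((\<lambda>x. vector [ 1/2 * (1 - x$1^2) * (x$1 * (\<gamma> - 2) + (4 - 3*\<gamma>) / sqrt 6 * G (x$2)),
               sqrt (2/3) * x$1 ] $ i) has_derivative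
          (\<lambda>h. (B2 ((\<gamma>-2)/2) ((4-3*\<gamma>)/(2 * sqrt 6) * (chi2 \<phi>1 / chi \<phi>1)) (sqrt (2/3)) *v h) $ i)) (at ?p)"
    proof cases
      case 1 then show ?thesis
        apply simp
        apply (rule derivative_eq_intros nth_deriv G' | simp)+
        apply (simp add: B2_def matrix_vector_mult_def sum_2 fun_eq_iff G1 Gd1 ac_simps)
        done
    next
      case 2 then show ?thesis
        apply simp
        apply (rule derivative_eq_intros nth_deriv G' | simp)+
        apply (simp add: B2_def matrix_vector_mult_def sum_2 fun_eq_iff G1 Gd1 ac_simps)
        done
    qed
  qed
qed

lemma jac_eq:
  fixes M :: "real^'n^'m" and f :: "real^'n \<Rightarrow> real^'m"
  assumes "(f has_derivative (\<lambda>h. M *v h)) (at x)"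
  shows "jacobian f (at x) = M"
proof -
  have "frechet_derivative f (at x) = (\<lambda>h. M *v h)"
    using frechet_derivative_at[OF assms] by simp
  then show ?thesis unfolding jacobian_def using matrix_of_matrix_vector_mul[of M] by simp
qed

lemma quad_fact:
  fixes S :: complex and d e :: real
  assumes "S^2 = of_real (d^2 + e)"
  shows "[:- (of_real d + S), 1:] * [:- (of_real d - S), 1:] = [:- of_real e, - 2 * of_real d, 1:]"
proof -
  have "(of_real d + S) * (of_real d - S) = - of_real e"
    using assms by (simp add: algebra_simps power2_eq_square)
  then show ?thesis by (simp add: algebra_simps)
qed

lemma sqrt_fact: "sqrt (2/3) * ((4 - 3*g) / (2 * sqrt 6) * c) = (4 - 3*g)/6 * c"
proof -
  have "sqrt (2/3) = sqrt (6/9)" by simp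
  also have "\<dots> = sqrt 6 / sqrt 9" by (rule real_sqrt_divide)
  also have "sqrt 9 = (3::real)" using real_sqrt_abs[of 3] by simp
  hence "sqrt 6 / sqrt 9 = sqrt 6 / (3::real)" by simp
  finally have e: "sqrt (2/3) = sqrt 6 / 3" .
  have "sqrt 6 * sqrt 6 = (6::real)" by simp
  then show ?thesis unfolding e by (simp add: field_simps)
qed


theorem mainTheorem4:
  fixes \<gamma> \<phi>1 :: real
    and V V1 V2 V3 chi chi1 chi2 chi3 :: "real \<Rightarrow> real"
  assumes gamma: "0 < \<gamma>" "\<gamma> < 2" "\<gamma> \<noteq> 4/3"
    and V_C3: "\<And>t. (V has_real_derivative V1 t) (at t)"
              "\<And>t. (V1 has_real_derivative V2 t) (at t)"
              "\<And>t. (V2 has_real_derivative V3 t) (at t)"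
              "continuous_on UNIV V3"
    and V_nonneg: "\<And>t. V t \<ge> 0"
    and chi_C3: "\<And>t. (chi has_real_derivative chi1 t) (at t)"
                "\<And>t. (chi1 has_real_derivative chi2 t) (at t)"
                "\<And>t. (chi2 has_real_derivative chi3 t) (at t)"
                "continuous_on UNIV chi3"
    and chi_pos: "\<And>t. chi t > 0"
    and crit: "chi1 \<phi>1 = 0"
  defines "\<Delta>\<^sub>1 \<equiv> (\<gamma> - 2) / 4"
    and "\<Delta>\<^sub>2 \<equiv> (4 - 3*\<gamma>) / 6"
    and "F \<equiv> sysF \<gamma> V1 chi chi1"
    and "P \<equiv> planarF \<gamma> chi chi1"
    and "p \<equiv> vector [0, 0, 1, \<phi>1] :: real^4"
    and "q \<equiv> vector [0, \<phi>1] :: real^2"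
  shows
    \<comment> \<open>(a)\<close>
    "F p = 0 \<and>
     charpoly (jacobian F (at p)) =
       [:- complex_of_real (\<gamma>/2), 1:] * [:- complex_of_real \<gamma>, 1:] *
       [:- (complex_of_real \<Delta>\<^sub>1 + csqrt (complex_of_real (\<Delta>\<^sub>1^2 + \<Delta>\<^sub>2 * chi2 \<phi>1 / chi \<phi>1))), 1:] * [:- (complex_of_real \<Delta>\<^sub>1 - csqrt (complex_of_real (\<Delta>\<^sub>1^2 + \<Delta>\<^sub>2 * chi2 \<phi>1 / chi \<phi>1))), 1:]
     \<and> P q = 0
     \<and> charpoly (jacobian P (at q)) =
         [:- (complex_of_real \<Delta>\<^sub>1 + csqrt (complex_of_real (\<Delta>\<^sub>1^2 + \<Delta>\<^sub>2 * chi2 \<phi>1 / chi \<phi>1))), 1:] * [:- (complex_of_real \<Delta>\<^sub>1 - csqrt (complex_of_real (\<Delta>\<^sub>1^2 + \<Delta>\<^sub>2 * chi2 \<phi>1 / chi \<phi>1))), 1:]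
     \<and> (((\<gamma> < 4/3 \<and> chi2 \<phi>1 < - (\<Delta>\<^sub>1^2 * chi \<phi>1 / \<Delta>\<^sub>2)) \<or>
          (4/3 < \<gamma> \<and> chi2 \<phi>1 > - (\<Delta>\<^sub>1^2 * chi \<phi>1 / \<Delta>\<^sub>2))) \<longrightarrow> stable_focus P q)
     \<and> (((\<gamma> < 4/3 \<and> - (\<Delta>\<^sub>1^2 * chi \<phi>1 / \<Delta>\<^sub>2) \<le> chi2 \<phi>1 \<and> chi2 \<phi>1 < 0) \<or>
          (4/3 < \<gamma> \<and> 0 < chi2 \<phi>1 \<and> chi2 \<phi>1 \<le> - (\<Delta>\<^sub>1^2 * chi \<phi>1 / \<Delta>\<^sub>2))) \<longrightarrow> stable_node P q)
     \<and> (((\<gamma> < 4/3 \<and> chi2 \<phi>1 > 0) \<or> (4/3 < \<gamma> \<and> chi2 \<phi>1 < 0)) \<longrightarrow> saddle P q)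
     \<and> (chi2 \<phi>1 = 0 \<longrightarrow> non_hyperbolic P q)"
proof -
  define c where "c = chi2 \<phi>1 / chi \<phi>1"
  define a where "a = (4-3*\<gamma>)/(2 * sqrt 6) * c"
  define e where "e = \<Delta>\<^sub>2 * c"
  define S where "S = csqrt (complex_of_real (\<Delta>\<^sub>1^2 + \<Delta>\<^sub>2 * chi2 \<phi>1 / chi \<phi>1))"
  have chi1pos: "chi \<phi>1 > 0" by (rule chi_pos)
  have sa: "sqrt (2/3) * a = e" unfolding a_def e_def \<Delta>\<^sub>2_def by (rule sqrt_fact)
  have ee: "\<Delta>\<^sub>2 * chi2 \<phi>1 / chi \<phi>1 = e" by (simp add: e_def c_def)
  have S2: "S^2 = of_real (\<Delta>\<^sub>1^2 + e)" unfolding S_def ee by simp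
  have d2: "(\<gamma> - 2) / 2 = 2 * \<Delta>\<^sub>1" by (simp add: \<Delta>\<^sub>1_def)
  have Q: "[:- (complex_of_real \<Delta>\<^sub>1 + S), 1:] * [:- (complex_of_real \<Delta>\<^sub>1 - S), 1:]
      = [:- complex_of_real (sqrt (2/3) * a), - complex_of_real ((\<gamma>-2)/2), 1:]"
    unfolding sa d2 quad_fact[OF S2] by simp
  have JF: "jacobian F (at p) = A4 \<gamma> a"
    unfolding F_def p_def a_def c_def
    by (rule jac_eq, rule F_deriv[OF V_C3(2) chi_C3(1,2) chi_pos crit])
  have JP: "jacobian P (at q) = B2 ((\<gamma>-2)/2) a (sqrt (2/3))"
    unfolding P_def q_def a_def c_def
    by (rule jac_eq, rule P_deriv[OF chi_C3(1,2) chi_pos crit])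
  have Fp: "F p = 0"
    by (simp add: F_def p_def sysF_def crit vec_eq_iff forall_4)
  have Pq: "P q = 0"
    by (simp add: P_def q_def planarF_def crit vec_eq_iff forall_2)
  have cpF: "charpoly (jacobian F (at p)) =
       [:- complex_of_real (\<gamma>/2), 1:] * [:- complex_of_real \<gamma>, 1:] *
       [:- (complex_of_real \<Delta>\<^sub>1 + S), 1:] * [:- (complex_of_real \<Delta>\<^sub>1 - S), 1:]"
    by (simp only: JF charpoly_A4 mult.assoc Q)
  have cpP: "charpoly (jacobian P (at q)) =
       [:- (complex_of_real \<Delta>\<^sub>1 + S), 1:] * [:- (complex_of_real \<Delta>\<^sub>1 - S), 1:]"
    unfolding JP charpoly_B2 Q by simp
  have eig: "l \<in> eigenvalues (jacobian P (at q)) \<longleftrightarrow> l^2 - 2 * of_real \<Delta>\<^sub>1 * l - of_real e = 0" for l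
    unfolding JP by (subst eig_B2) (simp_all add: sa d2)
  have d1neg: "\<Delta>\<^sub>1 < 0" using gamma by (simp add: \<Delta>\<^sub>1_def)
  have ce: "e * chi \<phi>1 = \<Delta>\<^sub>2 * chi2 \<phi>1" using chi1pos by (simp add: e_def c_def)
  have c_sign: "c > 0 \<longleftrightarrow> chi2 \<phi>1 > 0" "c < 0 \<longleftrightarrow> chi2 \<phi>1 < 0" "c = 0 \<longleftrightarrow> chi2 \<phi>1 = 0"
    using chi1pos by (auto simp: c_def divide_pos_pos zero_less_divide_iff divide_less_0_iff)
  show ?thesis
    apply (intro conjI impI)
        apply (rule Fp)
       apply (rule cpF[unfolded S_def])
      apply (rule Pq)
     apply (rule cpP[unfolded S_def])
    subgoal premises h
    proof -
    have "\<Delta>\<^sub>1^2 + e < 0"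
    proof -
      have "\<Delta>\<^sub>2 * chi2 \<phi>1 < - (\<Delta>\<^sub>1^2 * chi \<phi>1)"
      proof (cases "\<gamma> < 4/3")
        case True
        then have "\<Delta>\<^sub>2 > 0" by (simp add: \<Delta>\<^sub>2_def)
        with h True show ?thesis by (auto simp: field_simps)
      next
        case False
        then have "\<Delta>\<^sub>2 < 0" using gamma by (simp add: \<Delta>\<^sub>2_def)
        with h False show ?thesis by (auto simp: field_simps)
      qed
      then have "(\<Delta>\<^sub>1^2 + e) * chi \<phi>1 < 0" using ce by (simp add: algebra_simps)
      with chi1pos show ?thesis by (simp add: mult_less_0_iff)
    qed
    then show "stable_focus P q"
      unfolding stable_focus_def using Pq eig focus_roots d1neg by blast
    qed
    subgoal premises h
    proof -
    have "\<Delta>\<^sub>1^2 + e \<ge> 0 \<and> e < 0"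
    proof -
      have "\<Delta>\<^sub>2 * chi2 \<phi>1 \<ge> - (\<Delta>\<^sub>1^2 * chi \<phi>1) \<and> \<Delta>\<^sub>2 * chi2 \<phi>1 < 0"
      proof (cases "\<gamma> < 4/3")
        case True
        then have "\<Delta>\<^sub>2 > 0" by (simp add: \<Delta>\<^sub>2_def)
        with h True show ?thesis by (auto simp: field_simps mult_pos_neg)
      next
        case False
        then have "\<Delta>\<^sub>2 < 0" using gamma by (simp add: \<Delta>\<^sub>2_def)
        with h False show ?thesis by (auto simp: field_simps mult_neg_pos)
      qed
      then have "(\<Delta>\<^sub>1^2 + e) * chi \<phi>1 \<ge> 0 \<and> e * chi \<phi>1 < 0" using ce by (simp add: algebra_simps)
      with chi1pos show ?thesis by (simp add: mult_less_0_iff zero_le_mult_iff)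
    qed
    then show "stable_node P q"
      unfolding stable_node_def using Pq eig node_roots d1neg by blast
    qed
    subgoal premises h
    proof -
    have "e > 0"
    proof (cases "\<gamma> < 4/3")
      case True
      then have "\<Delta>\<^sub>2 > 0" by (simp add: \<Delta>\<^sub>2_def)
      with h True c_sign show ?thesis by (auto simp: e_def)
    next
      case False
      then have "\<Delta>\<^sub>2 < 0" using gamma by (simp add: \<Delta>\<^sub>2_def)
      with h False c_sign show ?thesis by (auto simp: e_def mult_neg_neg)
    qed
    from saddle_roots[OF this, of \<Delta>\<^sub>1] obtain r1 r2 where
      r: "r1 > 0" "(complex_of_real r1)^2 - 2 * of_real \<Delta>\<^sub>1 * of_real r1 - of_real e = 0"
         "r2 < 0" "(complex_of_real r2)^2 - 2 * of_real \<Delta>\<^sub>1 * of_real r2 - of_real e = 0"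
      by blast
    show "saddle P q"
      unfolding saddle_def using Pq
      by (intro conjI bexI[of _ "complex_of_real r1"] bexI[of _ "complex_of_real r2"])
         (simp_all add: eig r)
    qed
    subgoal premises h
    proof -
    from h have "e = 0" by (simp add: e_def c_def)
    show "non_hyperbolic P q"
      unfolding non_hyperbolic_def using Pq
      by (intro conjI bexI[of _ 0]) (simp_all add: eig \<open>e = 0\<close>)
    qed
    done
qed

end
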